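(* Let $a<b$, $k>0$, $\lambda\in(0,\pi/2]$, and $f\in C^3([a,b])$ with $f'(a)=f'(b)=0$. Then there is a constant $C$ (depending only on $f,k,\lambda,a,b$) such that for every sequence $\{\epsilon_n\}$ with $\epsilon_n\in J_n$, the unique solution $y_{\epsilon_n}$ of $\epsilon_n y''+ky=f(t)$ on $[a,b]$, $y'(a)=y'(b)=0$, satisfies $$\sup_{t\in[a,b]}\Big|y_{\epsilon_n}(t)-\frac{f(t)}{k}\Big|\le C\,\epsilon_n\quad\text{for all }n.$$
   Context: For a fixed constant $\lambda\in(0,\pi/2]$ and $n=0,1,2,\dots$ define the closed intervals $$J_n=\left[\,k\left(\frac{b-a}{(n+1)\pi-\lambda}\right)^2,\ k\left(\frac{b-a}{n\pi+\lambda}\right)^2\,\right].$$ Note that $\epsilon\in J_n$ iff $\sqrt{k/\epsilon}\,(b-a)\in[n\pi+\lambda,(n+1)\pi-\lambda]$. *)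

theory Defs
  imports "HOL-Analysis.Analysis"
begin

definition J :: "real \<Rightarrow> real \<Rightarrow> real \<Rightarrow> real \<Rightarrow> nat \<Rightarrow> real set" where
  "J k lam a b n =
     {k * ((b - a) / ((real n + 1) * pi - lam))^2 .. k * ((b - a) / (real n * pi + lam))^2}"

definition is_bvp_solution ::
  "real \<Rightarrow> real \<Rightarrow> (real \<Rightarrow> real) \<Rightarrow> real \<Rightarrow> real \<Rightarrow> (real \<Rightarrow> real) \<Rightarrow> bool" where
  "is_bvp_solution eps k f a b y \<longleftrightarrow>
     (\<exists>y1 y2. (\<forall>t\<in>{a..b}.
                 (y has_real_derivative y1 t) (at t within {a..b}) \<and>
                 (y1 has_real_derivative y2 t) (at t within {a..b}) \<and>
                 eps * y2 t + k * y t = f t) \<and>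
              y1 a = 0 \<and> y1 b = 0)"

end

theory Submission
  imports Defs
begin

lemma sin_bound:
  assumes "0 < lam" "lam \<le> pi/2" "real n * pi + lam \<le> x" "x \<le> (real n + 1) * pi - lam"
  shows "sin lam \<le> \<bar>sin x\<bar>"
proof -
  define y where "y = x - real n * pi"
  have x: "x = y + real n * pi" by (simp add: y_def)
  have "sin x = sin y * (-1)^n" unfolding x by (simp add: sin_add)
  hence ax: "\<bar>sin x\<bar> = \<bar>sin y\<bar>" by (simp add: abs_mult)
  have y1: "lam \<le> y" "y \<le> pi - lam" using assms by (auto simp: y_def algebra_simps)
  have "sin lam \<le> sin y"
  proof (cases "y \<le> pi/2")
    case True thus ?thesis using sin_mono_le_eq[of lam y] y1 assms by auto
  next
    case False
    have "sin lam \<le> sin (pi - y)" using sin_mono_le_eq[of lam "pi - y"] y1 assms False by auto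
    thus ?thesis by simp
  qed
  moreover have "0 \<le> sin y" using y1 assms by (intro sin_ge_zero) auto
  ultimately show ?thesis using ax by simp
qed

lemma lip:
  assumes "\<And>t. t \<in> {a..b} \<Longrightarrow> (h has_real_derivative h' t) (at t within {a..b})"
    "\<And>t. t \<in> {a..b} \<Longrightarrow> \<bar>h' t\<bar> \<le> B" "x \<in> {a..b}" "y \<in> {a..b}"
  shows "\<bar>h x - h y\<bar> \<le> B * \<bar>x - y\<bar>"
  using field_differentiable_bound[of "{a..b}" h h' B x y] assms by auto

lemma core:
  fixes Z Z1 Z2 f2 f3 :: "real \<Rightarrow> real"
  assumes ab: "a < b" and w: "w > 0" and s: "s > 0" and sw: "s \<le> \<bar>sin (w * (b - a))\<bar>"
    and dZ: "\<And>t. t \<in> {a..b} \<Longrightarrow> (Z has_real_derivative Z1 t) (at t within {a..b})"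
    and dZ1: "\<And>t. t \<in> {a..b} \<Longrightarrow> (Z1 has_real_derivative Z2 t) (at t within {a..b})"
    and ode: "\<And>t. t \<in> {a..b} \<Longrightarrow> Z2 t + w^2 * Z t + f2 t = 0"
    and Za: "Z1 a = 0" and Zb: "Z1 b = 0"
    and df2: "\<And>t. t \<in> {a..b} \<Longrightarrow> (f2 has_real_derivative f3 t) (at t within {a..b})"
    and M2: "\<And>t. t \<in> {a..b} \<Longrightarrow> \<bar>f2 t\<bar> \<le> M2"
    and M3: "\<And>t. t \<in> {a..b} \<Longrightarrow> \<bar>f3 t\<bar> \<le> M3"
    and t: "t \<in> {a..b}"
  shows "\<bar>Z t\<bar> \<le> (2*M3*(b-a) + M3*(b-a)/s + M2) / w^2"
proof -
  define th where "th = (\<lambda>t. w * (t - a))"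
  define P where "P = (\<lambda>t. Z1 t * cos (th t) + w * Z t * sin (th t) + f2 t * sin (th t) / w)"
  define Q where "Q = (\<lambda>t. w * Z t * cos (th t) - Z1 t * sin (th t) + f2 t * cos (th t) / w)"
  define iw where "iw = 1 / w"
  have wiw: "w * iw = 1" "iw * w = 1" using w by (auto simp: iw_def)
  have P_eq: "P = (\<lambda>t. Z1 t * cos (w * (t - a)) + w * Z t * sin (w * (t - a)) + f2 t * sin (w * (t - a)) * iw)"
    by (simp add: P_def th_def iw_def)
  have Q_eq: "Q = (\<lambda>t. w * Z t * cos (w * (t - a)) - Z1 t * sin (w * (t - a)) + f2 t * cos (w * (t - a)) * iw)"
    by (simp add: Q_def th_def iw_def)
  have dP: "(P has_real_derivative (f3 u * sin (th u) * iw)) (at u within {a..b})" if u: "u \<in> {a..b}" for u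
  proof -
    have e: "Z2 u = - (w^2) * Z u - f2 u" using ode[OF u] by linarith
    show ?thesis
      unfolding P_eq
      apply (rule derivative_eq_intros dZ[OF u] dZ1[OF u] df2[OF u] refl)+
      unfolding e th_def using wiw(1) by algebra
  qed
  have dQ: "(Q has_real_derivative (f3 u * cos (th u) * iw)) (at u within {a..b})" if u: "u \<in> {a..b}" for u
  proof -
    have e: "Z2 u = - (w^2) * Z u - f2 u" using ode[OF u] by linarith
    show ?thesis
      unfolding Q_eq
      apply (rule derivative_eq_intros dZ[OF u] dZ1[OF u] df2[OF u] refl)+
      unfolding e th_def using wiw(1) by algebra
  qed
  define B where "B = M3 * iw"
  have M30: "0 \<le> M3" using M3[of a] ab by (smt (verit) atLeastAtMost_iff)
  have bP: "\<bar>f3 u * sin (th u) * iw\<bar> \<le> B" if "u \<in> {a..b}" for u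
  proof -
    have "\<bar>f3 u * sin (th u)\<bar> \<le> M3" using M3[OF that] abs_sin_le_one[of "th u"]
      by (metis abs_ge_zero abs_mult mult_right_le_one_le order_trans)
    moreover have "iw > 0" using w by (simp add: iw_def)
    ultimately show ?thesis by (simp add: B_def abs_mult mult_right_mono)
  qed
  have bQ: "\<bar>f3 u * cos (th u) * iw\<bar> \<le> B" if "u \<in> {a..b}" for u
  proof -
    have "\<bar>f3 u * cos (th u)\<bar> \<le> M3" using M3[OF that] abs_cos_le_one[of "th u"]
      by (metis abs_ge_zero abs_mult mult_right_le_one_le order_trans)
    moreover have "iw > 0" using w by (simp add: iw_def)
    ultimately show ?thesis by (simp add: B_def abs_mult mult_right_mono)
  qed
  have aI: "a \<in> {a..b}" "b \<in> {a..b}" using ab by auto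
  have dist: "\<bar>u - v\<bar> \<le> b - a" if "u \<in> {a..b}" "v \<in> {a..b}" for u v using that by auto
  have B0: "0 \<le> B" using M30 w by (simp add: B_def iw_def)
  have lipP: "\<bar>P u - P v\<bar> \<le> B * (b - a)" if "u \<in> {a..b}" "v \<in> {a..b}" for u v
    using lip[of a b P _ B u v, OF dP bP that] dist[OF that] B0 by (meson mult_left_mono order_trans)
  have lipQ: "\<bar>Q u - Q v\<bar> \<le> B * (b - a)" if "u \<in> {a..b}" "v \<in> {a..b}" for u v
    using lip[of a b Q _ B u v, OF dQ bQ that] dist[OF that] B0 by (meson mult_left_mono order_trans)
  define R where "R = w * Z b + f2 b / w"
  have Pa: "P a = 0" by (simp add: P_def th_def Za)
  have Pb: "P b = sin (th b) * R" by (simp add: P_def R_def Zb algebra_simps add_divide_distrib)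
  have Qb: "Q b = cos (th b) * R" by (simp add: Q_def R_def Zb algebra_simps add_divide_distrib)
  have "\<bar>sin (th b) * R\<bar> \<le> B * (b - a)" using lipP[OF aI(2) aI(1)] Pa Pb by simp
  hence "s * \<bar>R\<bar> \<le> B * (b - a)" using sw unfolding th_def
    by (simp add: abs_mult) (meson abs_ge_zero mult_right_mono order_trans)
  hence R: "\<bar>R\<bar> \<le> B * (b - a) / s" using s by (simp add: field_simps)
  have "\<bar>Q b\<bar> \<le> \<bar>R\<bar>" unfolding Qb abs_mult using abs_cos_le_one[of "th b"]
    by (simp add: mult_left_le_one_le)
  hence Qt: "\<bar>Q t\<bar> \<le> B * (b - a) / s + B * (b - a)" using lipQ[OF t aI(2)] R by linarith
  have Pt: "\<bar>P t\<bar> \<le> B * (b - a)" using lipP[OF t aI(1)] Pa by simp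
  have id: "w * Z t = P t * sin (th t) + Q t * cos (th t) - f2 t / w"
  proof -
    have sc: "(sin (th t))^2 + (cos (th t))^2 = 1" by simp
    show ?thesis unfolding P_def Q_def divide_inverse using sc by algebra
  qed
  have "\<bar>P t * sin (th t)\<bar> \<le> \<bar>P t\<bar>" using abs_sin_le_one[of "th t"]
    by (simp add: abs_mult mult_right_le_one_le)
  moreover have "\<bar>Q t * cos (th t)\<bar> \<le> \<bar>Q t\<bar>" using abs_cos_le_one[of "th t"]
    by (simp add: abs_mult mult_right_le_one_le)
  moreover have "\<bar>f2 t / w\<bar> \<le> M2 / w" using M2[OF t] w by (simp add: divide_right_mono)
  ultimately have "\<bar>w * Z t\<bar> \<le> B * (b - a) + (B * (b - a) / s + B * (b - a)) + M2 / w"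
    unfolding id using Pt Qt by linarith
  also have "\<dots> = (2*M3*(b-a) + M3*(b-a)/s + M2) / w" using w s by (simp add: B_def iw_def field_simps)
  finally have "w * \<bar>Z t\<bar> \<le> (2*M3*(b-a) + M3*(b-a)/s + M2) / w" using w by (simp add: abs_mult)
  thus ?thesis using w by (simp add: field_simps power2_eq_square)
qed


lemma bound_on:
  fixes g :: "real \<Rightarrow> real"
  assumes "continuous_on {a..b} g"
  shows "\<exists>M. \<forall>t\<in>{a..b}. \<bar>g t\<bar> \<le> M"
proof -
  have "bounded (g ` {a..b})" by (intro compact_imp_bounded compact_continuous_image assms) auto
  then obtain M where "\<forall>x\<in>g ` {a..b}. \<bar>x\<bar> \<le> M" unfolding bounded_real by blast
  thus ?thesis by blast
qed

theorem mainTheorem4: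
  fixes a b k lam :: real and f f1 f2 f3 :: "real \<Rightarrow> real"
  assumes "a < b" and "k > 0" and "0 < lam" and "lam \<le> pi / 2"
    and "\<And>t. t \<in> {a..b} \<Longrightarrow> (f has_real_derivative f1 t) (at t within {a..b})"
    and "\<And>t. t \<in> {a..b} \<Longrightarrow> (f1 has_real_derivative f2 t) (at t within {a..b})"
    and "\<And>t. t \<in> {a..b} \<Longrightarrow> (f2 has_real_derivative f3 t) (at t within {a..b})"
    and "continuous_on {a..b} f3"
    and "f1 a = 0" and "f1 b = 0"
  shows "\<exists>C. \<forall>n. \<forall>eps \<in> J k lam a b n. \<forall>y. is_bvp_solution eps k f a b y \<longrightarrow>
           (\<forall>t\<in>{a..b}. \<bar>y t - f t / k\<bar> \<le> C * eps)"
proof -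
  note ab = assms(1) and k = assms(2) and lam = assms(3,4)
  obtain M3 where M3: "\<And>t. t \<in> {a..b} \<Longrightarrow> \<bar>f3 t\<bar> \<le> M3" using bound_on[OF assms(8)] by blast
  have "continuous_on {a..b} f2" using assms(7) by (rule DERIV_continuous_on)
  then obtain M2 where M2: "\<And>t. t \<in> {a..b} \<Longrightarrow> \<bar>f2 t\<bar> \<le> M2" using bound_on by blast
  define s where "s = sin lam"
  have s: "s > 0" unfolding s_def using lam pi_gt3 by (intro sin_gt_zero) auto
  define D where "D = 2*M3*(b-a) + M3*(b-a)/s + M2"
  show ?thesis
  proof (intro exI[of _ "D / k^2"] allI ballI impI)
    fix n eps y t
    assume eJ: "eps \<in> J k lam a b n" and sol: "is_bvp_solution eps k f a b y" and t: "t \<in> {a..b}"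
    obtain y1 y2 where Y: "\<And>t. t \<in> {a..b} \<Longrightarrow> (y has_real_derivative y1 t) (at t within {a..b})"
        "\<And>t. t \<in> {a..b} \<Longrightarrow> (y1 has_real_derivative y2 t) (at t within {a..b})"
        "\<And>t. t \<in> {a..b} \<Longrightarrow> eps * y2 t + k * y t = f t"
        and y1a: "y1 a = 0" and y1b: "y1 b = 0"
      using sol unfolding is_bvp_solution_def by blast
    define L where "L = b - a"
    have L: "L > 0" using ab by (simp add: L_def)
    define E1 where "E1 = real n * pi + lam"
    define E2 where "E2 = (real n + 1) * pi - lam"
    have E1: "E1 > 0" using lam by (simp add: E1_def add_nonneg_pos)
    have E2: "E2 > 0"
    proof -
      have "0 \<le> real n * pi" by simp
      moreover have "(real n + 1) * pi = real n * pi + pi" by (simp add: algebra_simps)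
      ultimately show ?thesis using lam pi_gt3 unfolding E2_def by linarith
    qed
    have e1: "k * (L / E2)^2 \<le> eps" and e2: "eps \<le> k * (L / E1)^2"
      using eJ by (auto simp: J_def L_def E1_def E2_def)
    have "k * (L / E2)^2 > 0" using k L E2 by simp
    hence eps: "eps > 0" using e1 by linarith
    define w where "w = sqrt (k / eps)"
    have w: "w > 0" using k eps by (simp add: w_def)
    have w2: "w^2 = k / eps" using k eps by (simp add: w_def)
    have wL2: "(w * L)^2 = k * L^2 / eps" using w2 by (simp add: power_mult_distrib)
    have "E1^2 \<le> (w * L)^2"
    proof -
      have "eps * E1^2 \<le> k * L^2" using e2 E1 by (simp add: field_simps power_divide)
      thus ?thesis unfolding wL2 using eps by (simp add: field_simps)
    qed
    hence le1: "E1 \<le> w * L" by (rule power2_le_imp_le) (use w L in simp)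
    have "(w * L)^2 \<le> E2^2"
    proof -
      have "k * L^2 \<le> eps * E2^2" using e1 E2 by (simp add: field_simps power_divide)
      thus ?thesis unfolding wL2 using eps by (simp add: field_simps)
    qed
    hence le2: "w * L \<le> E2" by (rule power2_le_imp_le) (use E2 in simp)
    have sw: "s \<le> \<bar>sin (w * (b - a))\<bar>" unfolding s_def
      using sin_bound[of lam n "w * L"] lam le1 le2 by (simp add: E1_def E2_def L_def)
    define Z where "Z = (\<lambda>t. k * y t - f t)"
    define Z1 where "Z1 = (\<lambda>t. k * y1 t - f1 t)"
    define Z2 where "Z2 = (\<lambda>t. k * y2 t - f2 t)"
    have dZ: "(Z has_real_derivative Z1 u) (at u within {a..b})" if "u \<in> {a..b}" for u
      unfolding Z_def Z1_def by (intro DERIV_diff DERIV_cmult Y(1) assms(5) that)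
    have dZ1: "(Z1 has_real_derivative Z2 u) (at u within {a..b})" if "u \<in> {a..b}" for u
      unfolding Z1_def Z2_def by (intro DERIV_diff DERIV_cmult Y(2) assms(6) that)
    have ode: "Z2 u + w^2 * Z u + f2 u = 0" if "u \<in> {a..b}" for u
    proof -
      have "eps * y2 u = f u - k * y u" using Y(3)[OF that] by linarith
      hence y2: "y2 u = (f u - k * y u) / eps" using eps by (simp add: eq_divide_eq mult.commute)
      have "k * ((f u - k * y u) / eps) + k / eps * (k * y u - f u) = 0"
        by (simp add: diff_divide_distrib add_divide_distrib algebra_simps)
      thus ?thesis unfolding Z_def Z2_def w2 y2 by (simp add: algebra_simps)
    qed
    have "\<bar>Z t\<bar> \<le> D / w^2"
      unfolding D_def
      by (rule core[OF ab w s sw dZ dZ1 ode _ _ assms(7) M2 M3 t])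
         (auto simp: Z1_def y1a y1b assms(9,10))
    also have "\<dots> = D * eps / k" using k eps by (simp add: w2)
    finally have "\<bar>Z t\<bar> \<le> D * eps / k" .
    moreover have "\<bar>y t - f t / k\<bar> = \<bar>Z t\<bar> / k"
      using k by (simp add: Z_def field_simps abs_div[symmetric])
    ultimately show "\<bar>y t - f t / k\<bar> \<le> D / k^2 * eps"
      using k by (simp add: field_simps power2_eq_square)
  qed
qed

end
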